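(* Let $\mu$ be a probability measure on $\mathbb{R}^n$ with mean $0$, and let $\alpha:\mathbb{R}^n\to\mathbb{R}\cup\{+\infty\}$ be convex, lower semi-continuous and proper. Suppose that for every probability measure $\nu$ on $\mathbb{R}^n$, $\mathcal{W}_c(\nu,\mu)\le H(\nu|\mu)$ with cost $c(x,y)=\alpha(x-y)$. Then $\alpha(x)\le\Lambda_\mu^*(x)$ for all $x\in\mathbb{R}^n$.
   Context: $\mathcal{W}_c(\nu,\mu)=\inf_\pi\int c\,d\pi$ over couplings $\pi$ of $\nu$ and $\mu$; $H$ is relative entropy. $\Lambda_\mu(\xi)=\log\int e^{\langle\xi,x\rangle}d\mu(x)$ and $\Lambda^*_\mu(x)=\sup_{\xi\in\mathbb{R}^n}\{\langle\xi,x\rangle-\Lambda_\mu(\xi)\}$ its Legendre transform. *)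

theory Defs
  imports "HOL-Probability.Probability"
begin

definition ereal_convex :: "('a::real_vector \<Rightarrow> ereal) \<Rightarrow> bool" where
  "ereal_convex f \<longleftrightarrow> (\<forall>x y. \<forall>t::real. 0 < t \<and> t < 1 \<longrightarrow>
     f ((1 - t) *\<^sub>R x + t *\<^sub>R y) \<le> ereal (1 - t) * f x + ereal t * f y)"

definition ereal_lsc :: "('a::topological_space \<Rightarrow> ereal) \<Rightarrow> bool" where
  "ereal_lsc f \<longleftrightarrow> (\<forall>x. f x \<le> Liminf (at x) f)"

definition ereal_proper :: "('a \<Rightarrow> ereal) \<Rightarrow> bool" where
  "ereal_proper f \<longleftrightarrow> (\<forall>x. f x \<noteq> -\<infinity>) \<and> (\<exists>x. f x \<noteq> \<infinity>)"

text \<open>Integral of an extended-real valued function: positive part minus negative part,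
  with the convention \<infinity> - \<infinity> = \<infinity> (Isabelle's ereal arithmetic).\<close>
definition ereal_integral :: "'a measure \<Rightarrow> ('a \<Rightarrow> ereal) \<Rightarrow> ereal" where
  "ereal_integral M f =
     enn2ereal (\<integral>\<^sup>+ x. e2ennreal (max 0 (f x)) \<partial>M)
     - enn2ereal (\<integral>\<^sup>+ x. e2ennreal (max 0 (- f x)) \<partial>M)"

definition borel_prob :: "'a::topological_space measure \<Rightarrow> bool" where
  "borel_prob M \<longleftrightarrow> prob_space M \<and> sets M = sets borel"

definition couplings :: "'a::topological_space measure \<Rightarrow> 'b::topological_space measure
    \<Rightarrow> ('a \<times> 'b) measure set" where
  "couplings \<nu> \<mu> = {\<pi>. prob_space \<pi> \<and> sets \<pi> = sets (borel \<Otimes>\<^sub>M borel)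
      \<and> distr \<pi> borel fst = \<nu> \<and> distr \<pi> borel snd = \<mu>}"

definition transport_cost :: "('a::topological_space \<Rightarrow> 'a \<Rightarrow> ereal) \<Rightarrow> 'a measure \<Rightarrow> 'a measure \<Rightarrow> ereal" where
  "transport_cost c \<nu> \<mu> = (INF \<pi>\<in>couplings \<nu> \<mu>. ereal_integral \<pi> (\<lambda>(x,y). c x y))"

text \<open>Relative entropy H(\<nu>|\<mu>) = \<integral> log(d\<nu>/d\<mu>) d\<nu> = \<integral> f log f d\<mu> if \<nu> \<ll> \<mu>, else +\<infinity>.\<close>
definition rel_entropy :: "'a measure \<Rightarrow> 'a measure \<Rightarrow> ereal" where
  "rel_entropy \<nu> \<mu> =
     (if absolutely_continuous \<mu> \<nu> \<and> sets \<nu> = sets \<mu> then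
        ereal_integral \<mu> (\<lambda>x. let f = enn2real (RN_deriv \<mu> \<nu> x) in ereal (f * ln f))
      else \<infinity>)"

definition log_laplace :: "'a::euclidean_space measure \<Rightarrow> 'a \<Rightarrow> ereal" where
  "log_laplace \<mu> \<xi> =
     (let I = \<integral>\<^sup>+ x. ennreal (exp (\<xi> \<bullet> x)) \<partial>\<mu> in
      if I = \<infinity> then \<infinity> else ereal (ln (enn2real I)))"

definition cramer_transform :: "'a::euclidean_space measure \<Rightarrow> 'a \<Rightarrow> ereal" where
  "cramer_transform \<mu> x = (SUP \<xi>. ereal (\<xi> \<bullet> x) - log_laplace \<mu> \<xi>)"

end

theory Submission
  imports Defs
begin

lemma epi_closed:
  fixes \<alpha> :: "'a::euclidean_space \<Rightarrow> ereal"
  assumes "ereal_lsc \<alpha>"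
  shows "closed {p :: 'a \<times> real. \<alpha> (fst p) \<le> ereal (snd p)}"
  unfolding closed_def
proof (subst open_subopen, intro ballI)
  fix p :: "'a \<times> real" assume "p \<in> - {p. \<alpha> (fst p) \<le> ereal (snd p)}"
  then obtain y s where p: "p = (y, s)" and ys: "ereal s < \<alpha> y" by (cases p) auto
  obtain r where r: "ereal s < ereal r" "ereal r < \<alpha> y" using ereal_dense2[OF ys] by auto
  have "ereal r < Liminf (at y) \<alpha>" using r(2) assms unfolding ereal_lsc_def
    using order_less_le_trans by blast
  then have "eventually (\<lambda>z. ereal r < \<alpha> z) (at y)" by (rule less_LiminfD)
  then obtain S where S: "open S" "y \<in> S" "\<And>z. z \<in> S \<Longrightarrow> z \<noteq> y \<Longrightarrow> ereal r < \<alpha> z"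
    unfolding eventually_at_topological by blast
  have S': "\<And>z. z \<in> S \<Longrightarrow> ereal r < \<alpha> z" using S(3) r(2) by (metis)
  show "\<exists>T. open T \<and> p \<in> T \<and> T \<subseteq> - {p. \<alpha> (fst p) \<le> ereal (snd p)}"
  proof (intro exI conjI)
    show "open (S \<times> {..<r})" using S(1) by (intro open_Times) auto
    show "p \<in> S \<times> {..<r}" using p S(2) r(1) by auto
    show "S \<times> {..<r} \<subseteq> - {p. \<alpha> (fst p) \<le> ereal (snd p)}"
    proof
      fix q assume "q \<in> S \<times> {..<r}"
      then obtain z u where q: "q = (z, u)" "z \<in> S" "u < r" by auto
      have "ereal u < ereal r" using q by simp
      also have "\<dots> < \<alpha> z" using S' q by blast
      finally show "q \<in> - {p. \<alpha> (fst p) \<le> ereal (snd p)}" using q by auto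
    qed
  qed
qed

lemma epi_convex:
  fixes \<alpha> :: "'a::euclidean_space \<Rightarrow> ereal"
  assumes "ereal_convex \<alpha>"
  shows "convex {p :: 'a \<times> real. \<alpha> (fst p) \<le> ereal (snd p)}"
  unfolding convex_def
proof (intro ballI allI impI, clarsimp)
  fix y1 s1 y2 s2 and u v :: real
  assume h: "\<alpha> y1 \<le> ereal s1" "\<alpha> y2 \<le> ereal s2" "0 \<le> u" "0 \<le> v" "u + v = 1"
  show "\<alpha> (u *\<^sub>R y1 + v *\<^sub>R y2) \<le> ereal (u * s1 + v * s2)"
  proof (cases "v = 0 \<or> v = 1")
    case True
    then show ?thesis using h by auto
  next
    case False
    then have v: "0 < v" "v < 1" using h by auto
    have u: "u = 1 - v" using h by simp
    have "\<alpha> (u *\<^sub>R y1 + v *\<^sub>R y2) \<le> ereal u * \<alpha> y1 + ereal v * \<alpha> y2"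
      using assms v unfolding ereal_convex_def u by blast
    also have "\<dots> \<le> ereal u * ereal s1 + ereal v * ereal s2"
      by (intro add_mono ereal_mult_left_mono) (use h in auto)
    finally show ?thesis by simp
  qed
qed

lemma sep_aux:
  fixes \<alpha> :: "'a::euclidean_space \<Rightarrow> ereal"
  assumes "ereal_convex \<alpha>" "ereal_lsc \<alpha>" "ereal_proper \<alpha>" "ereal t < \<alpha> x"
  shows "\<exists>a b d. inner a x + b * t < d \<and> 0 \<le> b \<and>
     (\<forall>y s. \<alpha> y \<le> ereal s \<longrightarrow> d < inner a y + b * s)"
proof -
  let ?E = "{p :: 'a \<times> real. \<alpha> (fst p) \<le> ereal (snd p)}"
  have "(x, t) \<notin> ?E" using assms(4) by auto
  from separating_hyperplane_closed_point[OF epi_convex[OF assms(1)] epi_closed[OF assms(2)] this]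
  obtain ab d where ab: "inner ab (x, t) < d" "\<forall>q\<in>?E. d < inner ab q" by blast
  obtain a b where abe: "ab = (a, b)" by (cases ab)
  have sep: "\<And>y s. \<alpha> y \<le> ereal s \<Longrightarrow> d < inner a y + b * s"
    using ab(2) abe by (auto simp: inner_Pair)
  obtain y0 where y0: "\<alpha> y0 \<noteq> \<infinity>" using assms(3) unfolding ereal_proper_def by auto
  then obtain r0 where r0: "\<alpha> y0 = ereal r0" using assms(3) unfolding ereal_proper_def
    by (cases "\<alpha> y0") auto
  have "0 \<le> b"
  proof (rule ccontr)
    assume "\<not> 0 \<le> b"
    then have b: "b < 0" by simp
    define s where "s = max r0 ((inner a y0 - d) / (- b))"
    have "\<alpha> y0 \<le> ereal s" using r0 unfolding s_def by simp
    then have "d < inner a y0 + b * s" by (rule sep)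
    moreover have "b * s \<le> b * ((inner a y0 - d) / (- b))"
      using b unfolding s_def by (intro mult_left_mono_neg) auto
    moreover have "b * ((inner a y0 - d) / (- b)) = d - inner a y0" using b by (simp add: field_simps)
    ultimately show False by linarith
  qed
  then show ?thesis using ab(1) abe sep by (intro exI[of _ a] exI[of _ b] exI[of _ d]) (auto simp: inner_Pair)
qed

lemma affine_minorant:
  fixes \<alpha> :: "'a::euclidean_space \<Rightarrow> ereal"
  assumes "ereal_convex \<alpha>" "ereal_lsc \<alpha>" "ereal_proper \<alpha>" "ereal t < \<alpha> x"
  shows "\<exists>\<eta> c. (\<forall>y. ereal (inner \<eta> y + c) \<le> \<alpha> y) \<and> t < inner \<eta> x + c"
proof -
  have nv: "\<exists>\<eta> c. (\<forall>y. ereal (inner \<eta> y + c) \<le> \<alpha> y) \<and> t' < inner \<eta> x' + c"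
    if h: "inner a x' + b * t' < d" "0 < b" "\<forall>y s. \<alpha> y \<le> ereal s \<longrightarrow> d < inner a y + b * s"
    for a b d t' x'
  proof (intro exI conjI allI)
    fix y
    show "ereal (inner (- (1/b) *\<^sub>R a) y + d / b) \<le> \<alpha> y"
    proof (cases "\<alpha> y")
      case (real r)
      then have "d < inner a y + b * r" using h(3) by auto
      then have "d / b - inner a y / b < r" using h(2) by (simp add: field_simps)
      then show ?thesis using real by (simp add: inner_scaleR_left)
    next
      case PInf then show ?thesis by simp
    next
      case MInf then show ?thesis using assms(3) unfolding ereal_proper_def by simp
    qed
  next
    show "t' < inner (- (1/b) *\<^sub>R a) x' + d / b"
      using h(1,2) by (simp add: field_simps inner_scaleR_left)
  qed
  obtain a b d where abd: "inner a x + b * t < d" "0 \<le> b"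
    "\<forall>y s. \<alpha> y \<le> ereal s \<longrightarrow> d < inner a y + b * s"
    using sep_aux[OF assms] by blast
  show ?thesis
  proof (cases "b = 0")
    case False
    then show ?thesis using nv[OF abd(1)] abd by auto
  next
    case b0: True
    obtain y0 where y0: "\<alpha> y0 \<noteq> \<infinity>" using assms(3) unfolding ereal_proper_def by auto
    then obtain r0 where r0: "\<alpha> y0 = ereal r0" using assms(3) unfolding ereal_proper_def
      by (cases "\<alpha> y0") auto
    have "ereal (r0 - 1) < \<alpha> y0" using r0 by simp
    from sep_aux[OF assms(1-3) this] obtain a' b' d' where abd': "inner a' y0 + b' * (r0 - 1) < d'" "0 \<le> b'"
      "\<forall>y s. \<alpha> y \<le> ereal s \<longrightarrow> d' < inner a' y + b' * s" by blast
    have "b' \<noteq> 0"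
    proof
      assume "b' = 0"
      then show False using abd'(1) abd'(3)[rule_format, of y0 r0] r0 by simp
    qed
    then obtain \<eta>0 c0 where m0: "\<forall>y. ereal (inner \<eta>0 y + c0) \<le> \<alpha> y"
      using nv[OF abd'(1)] abd' by fastforce
    define \<delta> where "\<delta> = d - inner a x"
    have \<delta>: "0 < \<delta>" using abd(1) b0 unfolding \<delta>_def by simp
    define l where "l = \<bar>t - inner \<eta>0 x - c0\<bar> / \<delta> + 1"
    have l0: "0 \<le> l" using \<delta> unfolding l_def by simp
    have "l * \<delta> = \<bar>t - inner \<eta>0 x - c0\<bar> + \<delta>" using \<delta> unfolding l_def by (simp add: field_simps)
    then have lx: "t < inner \<eta>0 x + c0 + l * \<delta>" using \<delta> by linarith
    show ?thesis
    proof (intro exI conjI allI)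
      fix y
      show "ereal (inner (\<eta>0 - l *\<^sub>R a) y + (c0 + l * d)) \<le> \<alpha> y"
      proof (cases "\<alpha> y")
        case (real r)
        then have "d < inner a y" using abd(3)[rule_format, of y r] b0 by simp
        then have "l * (d - inner a y) \<le> 0" using l0 by (simp add: mult_nonneg_nonpos)
        then have "inner (\<eta>0 - l *\<^sub>R a) y + (c0 + l * d) \<le> inner \<eta>0 y + c0"
          by (simp add: inner_diff_left algebra_simps)
        then show ?thesis using m0[rule_format, of y] order_trans by (metis ereal_less_eq(3))
      next
        case PInf then show ?thesis by simp
      next
        case MInf then show ?thesis using assms(3) unfolding ereal_proper_def by simp
      qed
    next
      show "t < inner (\<eta>0 - l *\<^sub>R a) x + (c0 + l * d)"
        using lx unfolding \<delta>_def by (simp add: inner_diff_left algebra_simps)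
    qed
  qed
qed

lemma enn2ereal_fin: "x \<noteq> (\<top>::ennreal) \<Longrightarrow> enn2ereal x = ereal (enn2real x)"
  by (metis enn2real_nonneg enn2ereal_ennreal ennreal_enn2real_if)

lemma ereal_integral_real:
  fixes h :: "'a \<Rightarrow> real"
  assumes h: "integrable M h"
  shows "ereal_integral M (\<lambda>x. ereal (h x)) = ereal (integral\<^sup>L M h)"
proof -
  have e1: "(\<lambda>x. e2ennreal (max 0 (ereal (h x)))) = (\<lambda>x. ennreal (h x))"
    by (auto simp: max_def ennreal_neg intro!: ext)
  have e2: "(\<lambda>x. e2ennreal (max 0 (- ereal (h x)))) = (\<lambda>x. ennreal (- h x))"
    by (auto simp: max_def ennreal_neg intro!: ext)
  have f1: "(\<integral>\<^sup>+x. ennreal (h x) \<partial>M) \<noteq> \<top>" using h by auto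
  have f2: "(\<integral>\<^sup>+x. ennreal (- h x) \<partial>M) \<noteq> \<top>" using h by auto
  show ?thesis unfolding ereal_integral_def e1 e2 real_lebesgue_integral_def[OF h]
    by (simp add: enn2ereal_fin[OF f1] enn2ereal_fin[OF f2])
qed

lemma ereal_integral_ge:
  fixes h :: "'a \<Rightarrow> real"
  assumes h: "integrable M h" and le: "\<And>x. x \<in> space M \<Longrightarrow> ereal (h x) \<le> f x"
  shows "ereal (integral\<^sup>L M h) \<le> ereal_integral M f"
proof -
  have "ereal (integral\<^sup>L M h) = ereal_integral M (\<lambda>x. ereal (h x))"
    using ereal_integral_real[OF h] by simp
  also have "\<dots> \<le> ereal_integral M f"
    unfolding ereal_integral_def
  proof (rule ereal_minus_mono)
    show "enn2ereal (\<integral>\<^sup>+ x. e2ennreal (max 0 (ereal (h x))) \<partial>M)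
        \<le> enn2ereal (\<integral>\<^sup>+ x. e2ennreal (max 0 (f x)) \<partial>M)"
      using le by (subst less_eq_ennreal.rep_eq[symmetric], intro nn_integral_mono e2ennreal_mono max.mono) auto
    show "enn2ereal (\<integral>\<^sup>+ x. e2ennreal (max 0 (- f x)) \<partial>M)
        \<le> enn2ereal (\<integral>\<^sup>+ x. e2ennreal (max 0 (- ereal (h x))) \<partial>M)"
      using le by (subst less_eq_ennreal.rep_eq[symmetric], intro nn_integral_mono e2ennreal_mono max.mono) (auto simp del: uminus_ereal.simps)
  qed
  finally show ?thesis .
qed

lemma ereal_integral_cong_AE:
  assumes "AE x in M. f x = g x"
  shows "ereal_integral M f = ereal_integral M g"
  unfolding ereal_integral_def
  by (intro arg_cong2[where f="(-)"] arg_cong[where f=enn2ereal] nn_integral_cong_AE)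
     (use assms in auto)

lemma exp_mul_bound:
  fixes t M :: real assumes "t \<le> M"
  shows "\<bar>exp t * t\<bar> \<le> 1 + \<bar>M\<bar> * exp M"
proof (cases "t \<le> 0")
  case True
  have "- t \<le> exp (- t)" using exp_ge_add_one_self[of "-t"] by linarith
  then have "exp t * (- t) \<le> exp t * exp (- t)" by (intro mult_left_mono) auto
  then have "exp t * (- t) \<le> 1" by (simp add: exp_minus)
  moreover have "\<bar>exp t * t\<bar> = exp t * (- t)" using True by (simp add: abs_mult)
  moreover have "0 \<le> \<bar>M\<bar> * exp M" by simp
  ultimately show ?thesis by linarith
next
  case False
  then have "exp t * t \<le> exp M * \<bar>M\<bar>" using assms
    by (intro mult_mono) auto
  then show ?thesis using False by (simp add: mult.commute)
qed

lemma step_bound: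
  fixes \<mu> :: "'a::euclidean_space measure" and \<alpha> :: "'a \<Rightarrow> ereal"
  assumes bp: "borel_prob \<mu>"
    and int: "integrable \<mu> (\<lambda>x. x)" and mean: "(\<integral>x. x \<partial>\<mu>) = 0"
    and W: "\<And>\<nu>. borel_prob \<nu> \<Longrightarrow>
           transport_cost (\<lambda>x y. \<alpha> (x - y)) \<nu> \<mu> \<le> rel_entropy \<nu> \<mu>"
    and minor: "\<And>y. ereal (inner \<eta> y + c) \<le> \<alpha> y"
  shows "(\<integral>y. exp (min (inner \<eta> y) M) \<partial>\<mu>) \<le> exp (- c)"
proof -
  interpret prob_space \<mu> using bp unfolding borel_prob_def by auto
  have sb: "sets \<mu> = sets borel" using bp unfolding borel_prob_def by auto
  have mcong: "measurable \<mu> N = measurable borel N" for N :: "'b measure"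
    by (rule measurable_cong_sets[OF sb refl])
  define g where "g y = min (inner \<eta> y) M" for y
  have gb: "g \<in> borel_measurable borel" unfolding g_def by measurable
  have gm: "g \<in> borel_measurable \<mu>" by (subst measurable_cong_sets[OF sb refl]) (rule gb)
  have egm: "(\<lambda>y. exp (g y)) \<in> borel_measurable \<mu>" using gm by measurable
  define Z where "Z = (\<integral>y. exp (g y) \<partial>\<mu>)"
  have intZ: "integrable \<mu> (\<lambda>y. exp (g y))"
    using egm by (intro integrable_const_bound[where B="exp M"]) (auto simp: g_def)
  have Zpos: "0 < Z"
  proof -
    have "0 \<le> Z" unfolding Z_def by (intro integral_nonneg_AE) auto
    moreover have "Z \<noteq> 0"
    proof
      assume "Z = 0"
      then have "AE y in \<mu>. exp (g y) = 0"
        using integral_nonneg_eq_0_iff_AE[OF intZ] unfolding Z_def by auto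
      then have "AE y in \<mu>. False" by simp
      then show False by simp
    qed
    ultimately show ?thesis by simp
  qed
  define \<rho> where "\<rho> y = exp (g y) / Z" for y
  have \<rho>m: "\<rho> \<in> borel_measurable \<mu>" unfolding \<rho>_def using egm by measurable
  have \<rho>pos: "0 < \<rho> y" for y unfolding \<rho>_def using Zpos by simp
  have int\<rho>: "integrable \<mu> \<rho>" unfolding \<rho>_def using intZ by auto
  have \<rho>1: "(\<integral>y. \<rho> y \<partial>\<mu>) = 1" unfolding \<rho>_def Z_def using Zpos Z_def by simp
  define B where "B = 1 + \<bar>M\<bar> * exp M"
  have int\<rho>g: "integrable \<mu> (\<lambda>y. \<rho> y * g y)"
  proof (rule integrable_const_bound[where B="B / Z"])
    show "AE x in \<mu>. norm (\<rho> x * g x) \<le> B / Z"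
    proof (intro AE_I2)
      fix x
      have "\<bar>exp (g x) * g x\<bar> \<le> B" unfolding B_def by (rule exp_mul_bound) (simp add: g_def)
      then show "norm (\<rho> x * g x) \<le> B / Z" using Zpos
        by (simp add: \<rho>_def abs_mult divide_le_cancel field_simps)
    qed
    show "(\<lambda>x. \<rho> x * g x) \<in> borel_measurable \<mu>" using \<rho>m gm by measurable
  qed
  define A where "A = (\<integral>y. \<rho> y * g y \<partial>\<mu>)"
  define \<nu> where "\<nu> = density \<mu> (\<lambda>y. ennreal (\<rho> y))"
  have s\<nu>: "sets \<nu> = sets \<mu>" unfolding \<nu>_def by simp
  have "emeasure \<nu> (space \<nu>) = 1"
  proof -
    have "emeasure \<nu> (space \<nu>) = (\<integral>\<^sup>+y. ennreal (\<rho> y) \<partial>\<mu>)"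
      unfolding \<nu>_def using \<rho>m by (simp add: emeasure_density)
    also have "\<dots> = ennreal 1"
      using nn_integral_eq_integral[OF int\<rho>] \<rho>pos \<rho>1 by (simp add: less_imp_le)
    finally show ?thesis by simp
  qed
  then have p\<nu>: "prob_space \<nu>" by (rule prob_spaceI)
  have bp\<nu>: "borel_prob \<nu>" using p\<nu> s\<nu> sb unfolding borel_prob_def by simp
  have ac: "absolutely_continuous \<mu> \<nu>" unfolding \<nu>_def using \<rho>m by (intro absolutely_continuousI_density) measurable
  have RN: "AE y in \<mu>. ennreal (\<rho> y) = RN_deriv \<mu> \<nu> y"
    unfolding \<nu>_def using \<rho>m by (intro RN_deriv_unique) auto
  have H: "rel_entropy \<nu> \<mu> = ereal (A - ln Z)"
  proof -
    have "rel_entropy \<nu> \<mu> = ereal_integral \<mu> (\<lambda>x. let f = enn2real (RN_deriv \<mu> \<nu> x) in ereal (f * ln f))"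
      unfolding rel_entropy_def using ac s\<nu> by simp
    also have "\<dots> = ereal_integral \<mu> (\<lambda>x. ereal (\<rho> x * g x - ln Z * \<rho> x))"
    proof (rule ereal_integral_cong_AE)
      show "AE x in \<mu>. (let f = enn2real (RN_deriv \<mu> \<nu> x) in ereal (f * ln f)) =
          ereal (\<rho> x * g x - ln Z * \<rho> x)"
        using RN
      proof (elim AE_mp, intro AE_I2 impI)
        fix x assume "ennreal (\<rho> x) = RN_deriv \<mu> \<nu> x"
        then have e: "enn2real (RN_deriv \<mu> \<nu> x) = \<rho> x" using \<rho>pos[of x] by (metis enn2real_ennreal less_imp_le)
        have l: "ln (\<rho> x) = g x - ln Z" unfolding \<rho>_def using Zpos by (simp add: ln_div)
        show "(let f = enn2real (RN_deriv \<mu> \<nu> x) in ereal (f * ln f)) =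
          ereal (\<rho> x * g x - ln Z * \<rho> x)" unfolding e l Let_def by (simp add: algebra_simps)
      qed
    qed
    also have "\<dots> = ereal (\<integral>x. \<rho> x * g x - ln Z * \<rho> x \<partial>\<mu>)"
      by (rule ereal_integral_real) (use int\<rho>g int\<rho> in auto)
    also have "(\<integral>x. \<rho> x * g x - ln Z * \<rho> x \<partial>\<mu>) = A - ln Z"
      unfolding A_def using int\<rho>g int\<rho> \<rho>1 by simp
    finally show ?thesis .
  qed
  have low: "ereal (A + c) \<le> transport_cost (\<lambda>x y. \<alpha> (x - y)) \<nu> \<mu>"
    unfolding transport_cost_def
  proof (rule INF_greatest)
    fix \<pi> assume "\<pi> \<in> couplings \<nu> \<mu>"
    then have \<pi>: "prob_space \<pi>" "sets \<pi> = sets (borel \<Otimes>\<^sub>M borel)"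
      "distr \<pi> borel fst = \<nu>" "distr \<pi> borel snd = \<mu>" unfolding couplings_def by auto
    have mfst: "fst \<in> measurable \<pi> borel"
      using measurable_cong_sets[OF \<pi>(2) refl] measurable_fst by (metis borel_prod)
    have msnd: "snd \<in> measurable \<pi> borel"
      using measurable_cong_sets[OF \<pi>(2) refl] measurable_snd by (metis borel_prod)
    have ig\<nu>: "integrable \<nu> g"
      unfolding \<nu>_def using int\<rho>g \<rho>m gm \<rho>pos by (subst integrable_density) (auto simp: less_imp_le)
    have i1: "integrable \<pi> (\<lambda>p. g (fst p))"
      using integrable_distr_eq[OF mfst gb] ig\<nu> \<pi>(3) by simp
    have e1: "(\<integral>p. g (fst p) \<partial>\<pi>) = A"
    proof -
      have "(\<integral>p. g (fst p) \<partial>\<pi>) = (\<integral>y. g y \<partial>\<nu>)"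
        using integral_distr[OF mfst gb] \<pi>(3) by simp
      also have "\<dots> = A" unfolding \<nu>_def A_def using \<rho>m gm \<rho>pos
        by (subst integral_density) (auto simp: less_imp_le)
      finally show ?thesis .
    qed
    have ib: "(\<lambda>y. inner \<eta> y) \<in> borel_measurable borel" by measurable
    have i\<mu>: "integrable \<mu> (\<lambda>y. inner \<eta> y)" using int by auto
    have i2: "integrable \<pi> (\<lambda>p. inner \<eta> (snd p))"
      using integrable_distr_eq[OF msnd ib] i\<mu> \<pi>(4) by simp
    have e2: "(\<integral>p. inner \<eta> (snd p) \<partial>\<pi>) = 0"
    proof -
      have "(\<integral>p. inner \<eta> (snd p) \<partial>\<pi>) = (\<integral>y. inner \<eta> y \<partial>\<mu>)"
        using integral_distr[OF msnd ib] \<pi>(4) by simp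
      also have "\<dots> = 0" using int mean by simp
      finally show ?thesis .
    qed
    interpret P: prob_space \<pi> by (rule \<pi>(1))
    have ih: "integrable \<pi> (\<lambda>p. g (fst p) - inner \<eta> (snd p) + c)"
      using i1 i2 by auto
    have "ereal (A + c) = ereal (\<integral>p. g (fst p) - inner \<eta> (snd p) + c \<partial>\<pi>)"
      using i1 i2 e1 e2 by (simp add: P.prob_space)
    also have "\<dots> \<le> ereal_integral \<pi> (\<lambda>(x, y). \<alpha> (x - y))"
    proof (rule ereal_integral_ge[OF ih])
      fix p :: "'a \<times> 'a"
      have "g (fst p) - inner \<eta> (snd p) + c \<le> inner \<eta> (fst p - snd p) + c"
        by (simp add: g_def inner_diff_right)
      then have "ereal (g (fst p) - inner \<eta> (snd p) + c) \<le> ereal (inner \<eta> (fst p - snd p) + c)" by simp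
      also have "\<dots> \<le> \<alpha> (fst p - snd p)" by (rule minor)
      finally show "ereal (g (fst p) - inner \<eta> (snd p) + c) \<le> (case p of (x, y) \<Rightarrow> \<alpha> (x - y))"
        by (simp add: case_prod_beta)
    qed
    finally show "ereal (A + c) \<le> ereal_integral \<pi> (\<lambda>(x, y). \<alpha> (x - y))" .
  qed
  have "ereal (A + c) \<le> ereal (A - ln Z)" using low W[OF bp\<nu>] H by (metis order_trans)
  then have "ln Z \<le> - c" by simp
  then have "Z \<le> exp (- c)" using Zpos by (metis exp_ln exp_le_cancel_iff)
  then show ?thesis unfolding Z_def g_def .
qed

lemma laplace_bound:
  fixes \<mu> :: "'a::euclidean_space measure" and \<alpha> :: "'a \<Rightarrow> ereal"
  assumes bp: "borel_prob \<mu>"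
    and int: "integrable \<mu> (\<lambda>x. x)" and mean: "(\<integral>x. x \<partial>\<mu>) = 0"
    and W: "\<And>\<nu>. borel_prob \<nu> \<Longrightarrow>
           transport_cost (\<lambda>x y. \<alpha> (x - y)) \<nu> \<mu> \<le> rel_entropy \<nu> \<mu>"
    and minor: "\<And>y. ereal (inner \<eta> y + c) \<le> \<alpha> y"
  shows "(\<integral>\<^sup>+y. ennreal (exp (inner \<eta> y)) \<partial>\<mu>) \<le> ennreal (exp (- c))"
proof -
  interpret prob_space \<mu> using bp unfolding borel_prob_def by auto
  have sb: "sets \<mu> = sets borel" using bp unfolding borel_prob_def by auto
  define f where "f n y = ennreal (exp (min (inner \<eta> y) (real n)))" for n :: nat and y
  have fb: "f n \<in> borel_measurable borel" for n unfolding f_def by measurable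
  have fm: "f n \<in> borel_measurable \<mu>" for n by (subst measurable_cong_sets[OF sb refl]) (rule fb)
  have inc: "incseq f"
    unfolding f_def incseq_def le_fun_def by (auto intro!: ennreal_leI)
  have pw: "(SUP n. f n y) = ennreal (exp (inner \<eta> y))" for y
  proof (rule antisym)
    show "(SUP n. f n y) \<le> ennreal (exp (inner \<eta> y))"
      unfolding f_def by (intro SUP_least ennreal_leI) auto
    have "inner \<eta> y \<le> real (nat \<lceil>inner \<eta> y\<rceil>)" by linarith
    then have "f (nat \<lceil>inner \<eta> y\<rceil>) y = ennreal (exp (inner \<eta> y))" unfolding f_def by simp
    then show "ennreal (exp (inner \<eta> y)) \<le> (SUP n. f n y)" by (metis SUP_upper UNIV_I)
  qed
  have "(\<integral>\<^sup>+y. ennreal (exp (inner \<eta> y)) \<partial>\<mu>) = (\<integral>\<^sup>+y. (SUP n. f n y) \<partial>\<mu>)"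
    by (simp add: pw)
  also have "\<dots> = (SUP n. integral\<^sup>N \<mu> (f n))"
    by (rule nn_integral_monotone_convergence_SUP[OF inc fm])
  also have "\<dots> \<le> ennreal (exp (- c))"
  proof (rule SUP_least)
    fix n :: nat
    have em: "(\<lambda>y. exp (min (inner \<eta> y) (real n))) \<in> borel_measurable \<mu>"
    proof -
      have "(\<lambda>y. exp (min (inner \<eta> y) (real n))) \<in> borel_measurable borel" by measurable
      then show ?thesis by (subst measurable_cong_sets[OF sb refl])
    qed
    have ie: "integrable \<mu> (\<lambda>y. exp (min (inner \<eta> y) (real n)))"
      using em by (intro integrable_const_bound[where B="exp (real n)"]) auto
    have "integral\<^sup>N \<mu> (f n) = ennreal (\<integral>y. exp (min (inner \<eta> y) (real n)) \<partial>\<mu>)"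
      unfolding f_def by (rule nn_integral_eq_integral[OF ie]) auto
    also have "\<dots> \<le> ennreal (exp (- c))"
      by (intro ennreal_leI step_bound[OF bp int mean W minor])
    finally show "integral\<^sup>N \<mu> (f n) \<le> ennreal (exp (- c))" .
  qed
  finally show ?thesis .
qed

theorem fact3p7:
  fixes \<mu> :: "'a::euclidean_space measure" and \<alpha> :: "'a \<Rightarrow> ereal"
  assumes "borel_prob \<mu>"
    and "integrable \<mu> (\<lambda>x. x)" and "(\<integral>x. x \<partial>\<mu>) = 0"
    and "ereal_convex \<alpha>" and "ereal_lsc \<alpha>" and "ereal_proper \<alpha>"
    and "\<And>\<nu>. borel_prob \<nu> \<Longrightarrow>
           transport_cost (\<lambda>x y. \<alpha> (x - y)) \<nu> \<mu> \<le> rel_entropy \<nu> \<mu>"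
  shows "\<alpha> x \<le> cramer_transform \<mu> x"
proof (rule ccontr)
  assume "\<not> \<alpha> x \<le> cramer_transform \<mu> x"
  then have "cramer_transform \<mu> x < \<alpha> x" by simp
  then obtain t where t: "cramer_transform \<mu> x < ereal t" "ereal t < \<alpha> x"
    using ereal_dense2 by blast
  obtain \<eta> c where m: "\<forall>y. ereal (inner \<eta> y + c) \<le> \<alpha> y" "t < inner \<eta> x + c"
    using affine_minorant[OF assms(4-6) t(2)] by blast
  interpret prob_space \<mu> using assms(1) unfolding borel_prob_def by auto
  have sb: "sets \<mu> = sets borel" using assms(1) unfolding borel_prob_def by auto
  define I where "I = (\<integral>\<^sup>+y. ennreal (exp (inner \<eta> y)) \<partial>\<mu>)"
  have Ile: "I \<le> ennreal (exp (- c))"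
    unfolding I_def using laplace_bound[OF assms(1-3) assms(7)] m(1) by blast
  then have Itop: "I < \<top>" by (metis ennreal_less_top le_less_trans)
  have "I \<noteq> 0"
  proof
    assume "I = 0"
    have em: "(\<lambda>y. ennreal (exp (inner \<eta> y))) \<in> borel_measurable \<mu>"
    proof -
      have "(\<lambda>y. ennreal (exp (inner \<eta> y))) \<in> borel_measurable borel" by measurable
      then show ?thesis by (subst measurable_cong_sets[OF sb refl])
    qed
    have "AE y in \<mu>. ennreal (exp (inner \<eta> y)) = 0"
      using nn_integral_0_iff_AE[OF em] \<open>I = 0\<close> unfolding I_def by simp
    then have "AE y in \<mu>. False" by simp
    then show False by simp
  qed
  then have Ipos: "0 < enn2real I" using Itop by (simp add: enn2real_positive_iff zero_less_iff_neq_zero)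
  have Ile': "enn2real I \<le> exp (- c)" using Ile by (intro enn2real_leI) auto
  have LL: "log_laplace \<mu> \<eta> = ereal (ln (enn2real I))"
    unfolding log_laplace_def I_def[symmetric] Let_def using Itop by simp
  have "ln (enn2real I) \<le> - c" using Ipos Ile' by (metis ln_exp ln_le_cancel_iff exp_gt_zero)
  have "ereal (inner \<eta> x) - log_laplace \<mu> \<eta> \<le> cramer_transform \<mu> x"
    unfolding cramer_transform_def by (rule SUP_upper) simp
  then have "ereal (inner \<eta> x - ln (enn2real I)) \<le> cramer_transform \<mu> x" using LL by simp
  moreover have "ereal t < ereal (inner \<eta> x - ln (enn2real I))"
    using m(2) \<open>ln (enn2real I) \<le> - c\<close> by simp
  ultimately have "ereal t < cramer_transform \<mu> x" by (simp only: less_le_trans)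
  then show False using t(1) by simp
qed

end
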